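(* A regular Lie algebra (finite-dimensional, over an infinite field $K$) which is not semisimple (i.e. has a nonzero solvable ideal) is nilpotent.
   Context: All algebras are finite-dimensional over an infinite field $K$. For $x\in L$ write $\chi_{\operatorname{ad} x}(t)=\det(t-\operatorname{ad}x)=\sum_{i}a_i(x)t^i$. The rank $\operatorname{rk}L$ is the minimal $r$ such that $a_r(x)\neq 0$ for some $x\in L$. An element $x$ is regular if $a_{\operatorname{rk}L}(x)\neq 0$. A Lie algebra is regular if each of its nonzero elements is regular. A Lie algebra is semisimple if its solvable radical is zero. *)

theory Defs
  imports "HOL-Analysis.Analysis" "HOL-Computational_Algebra.Polynomial"
begin

text \<open>A finite-dimensional Lie algebra over a field 'k is modelled (after choosing a
basis) as the coordinate space 'k^'n together with a bracket br.\<close>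

definition lie_algebra :: "('k::field^'n \<Rightarrow> 'k^'n \<Rightarrow> 'k^'n) \<Rightarrow> bool" where
  "lie_algebra br \<longleftrightarrow>
     (\<forall>x y z. br (x + y) z = br x z + br y z) \<and>
     (\<forall>x y z. br x (y + z) = br x y + br x z) \<and>
     (\<forall>c x y. br (c *s x) y = c *s br x y) \<and>
     (\<forall>c x y. br x (c *s y) = c *s br x y) \<and>
     (\<forall>x. br x x = 0) \<and>
     (\<forall>x y z. br x (br y z) + br y (br z x) + br z (br x y) = 0)"

definition ad_matrix :: "('k::field^'n \<Rightarrow> 'k^'n \<Rightarrow> 'k^'n) \<Rightarrow> 'k^'n \<Rightarrow> 'k^'n^'n" where
  "ad_matrix br x = (\<chi> i j. br x (axis j 1) $ i)"

definition ad_charpoly :: "('k::field^'n \<Rightarrow> 'k^'n \<Rightarrow> 'k^'n) \<Rightarrow> 'k^'n \<Rightarrow> 'k poly" where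
  "ad_charpoly br x =
     det (\<chi> i j. (if i = j then [:0, 1:] else 0) - [:ad_matrix br x $ i $ j:])"

definition lie_rank :: "('k::field^'n \<Rightarrow> 'k^'n \<Rightarrow> 'k^'n) \<Rightarrow> nat" where
  "lie_rank br = (LEAST r. \<exists>x. coeff (ad_charpoly br x) r \<noteq> 0)"

definition regular_element :: "('k::field^'n \<Rightarrow> 'k^'n \<Rightarrow> 'k^'n) \<Rightarrow> 'k^'n \<Rightarrow> bool" where
  "regular_element br x \<longleftrightarrow> coeff (ad_charpoly br x) (lie_rank br) \<noteq> 0"

definition regular_lie_algebra :: "('k::field^'n \<Rightarrow> 'k^'n \<Rightarrow> 'k^'n) \<Rightarrow> bool" where
  "regular_lie_algebra br \<longleftrightarrow> (\<forall>x. x \<noteq> 0 \<longrightarrow> regular_element br x)"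

definition lie_ideal :: "('k::field^'n \<Rightarrow> 'k^'n \<Rightarrow> 'k^'n) \<Rightarrow> ('k^'n) set \<Rightarrow> bool" where
  "lie_ideal br I \<longleftrightarrow> vec.subspace I \<and> (\<forall>x y. y \<in> I \<longrightarrow> br x y \<in> I)"

fun derived_series :: "('k::field^'n \<Rightarrow> 'k^'n \<Rightarrow> 'k^'n) \<Rightarrow> ('k^'n) set \<Rightarrow> nat \<Rightarrow> ('k^'n) set" where
  "derived_series br I 0 = I"
| "derived_series br I (Suc k) =
     vec.span {br a b | a b. a \<in> derived_series br I k \<and> b \<in> derived_series br I k}"

definition solvable_subalg :: "('k::field^'n \<Rightarrow> 'k^'n \<Rightarrow> 'k^'n) \<Rightarrow> ('k^'n) set \<Rightarrow> bool" where
  "solvable_subalg br I \<longleftrightarrow> (\<exists>k. derived_series br I k = {0})"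

text \<open>Semisimple: the solvable radical (largest solvable ideal) is zero, i.e. every
solvable ideal is zero.\<close>
definition semisimple :: "('k::field^'n \<Rightarrow> 'k^'n \<Rightarrow> 'k^'n) \<Rightarrow> bool" where
  "semisimple br \<longleftrightarrow> (\<forall>I. lie_ideal br I \<and> solvable_subalg br I \<longrightarrow> I = {0})"

fun lower_central :: "('k::field^'n \<Rightarrow> 'k^'n \<Rightarrow> 'k^'n) \<Rightarrow> nat \<Rightarrow> ('k^'n) set" where
  "lower_central br 0 = UNIV"
| "lower_central br (Suc k) = vec.span {br a b | a b. b \<in> lower_central br k}"

definition nilpotent_lie :: "('k::field^'n \<Rightarrow> 'k^'n \<Rightarrow> 'k^'n) \<Rightarrow> bool" where
  "nilpotent_lie br \<longleftrightarrow> (\<exists>k. lower_central br k = {0})"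

end

theory Submission
  imports Defs
begin


context
  fixes br :: "'k::field^'n \<Rightarrow> 'k^'n \<Rightarrow> 'k^'n"
  assumes L: "lie_algebra br"
begin

lemma addL: "br (x + y) z = br x z + br y z" using L unfolding lie_algebra_def by blast
lemma addR: "br x (y + z) = br x y + br x z" using L unfolding lie_algebra_def by blast
lemma scL: "br (c *s x) y = c *s br x y" using L unfolding lie_algebra_def by blast
lemma scR: "br x (c *s y) = c *s br x y" using L unfolding lie_algebra_def by blast
lemma alt: "br x x = 0" using L unfolding lie_algebra_def by blast
lemma jac: "br x (br y z) + br y (br z x) + br z (br x y) = 0" using L unfolding lie_algebra_def by blast

lemma zeroR[simp]: "br x 0 = 0"
  using addR[of x 0 0] by simp
lemma zeroL[simp]: "br 0 x = 0"
  using addL[of 0 0 x] by simp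
lemma negR: "br x (- y) = - br x y"
  using addR[of x y "-y"] by (simp add: eq_neg_iff_add_eq_0 add.commute)
lemma negL: "br (- x) y = - br x y"
  using addL[of x "-x" y] by (simp add: eq_neg_iff_add_eq_0 add.commute)
lemma diffR: "br x (y - z) = br x y - br x z"
  using addR[of x y "-z"] negR[of x z] by simp
lemma anti: "br y x = - br x y"
proof -
  have "0 = br (x + y) (x + y)" by (simp add: alt)
  also have "\<dots> = br x x + br x y + (br y x + br y y)" by (simp only: addL addR add_ac)
  also have "\<dots> = br x y + br y x" by (simp add: alt)
  finally have "br x y + br y x = 0" by simp
  then show ?thesis by (simp add: eq_neg_iff_add_eq_0 add.commute)
qed

lemma jac2: "br h (br z w) = br z (br h w) + br (br h z) w"
proof -
  have "br h (br z w) + br z (br w h) + br w (br h z) = 0" by (rule jac)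
  moreover have "br z (br w h) = - br z (br h w)" by (simp add: anti[of w h] negR)
  moreover have "br w (br h z) = - br (br h z) w" by (rule anti)
  ultimately show ?thesis by (simp add: algebra_simps eq_neg_iff_add_eq_0)
qed

lemma linR: "Vector_Spaces.linear (*s) (*s) (br x)"
  by (unfold_locales) (simp_all add: addR scR)

lemma span_closed:
  assumes "vec.subspace U" "\<And>g. g \<in> G \<Longrightarrow> br x g \<in> U" "y \<in> vec.span G"
  shows "br x y \<in> U"
proof -
  have "vec.subspace {y. br x y \<in> U}"
    using assms(1) unfolding vec.subspace_def by (auto simp: addR scR)
  then show ?thesis using vec.span_induct[OF assms(3), of "\<lambda>y. br x y \<in> U"] assms(2) by auto
qed

end



definition subalg :: "('k::field^'n \<Rightarrow> 'k^'n \<Rightarrow> 'k^'n) \<Rightarrow> ('k^'n) set \<Rightarrow> bool" where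
  "subalg br K \<longleftrightarrow> vec.subspace K \<and> (\<forall>a\<in>K. \<forall>b\<in>K. br a b \<in> K)"

definition inv_by :: "('k::field^'n \<Rightarrow> 'k^'n \<Rightarrow> 'k^'n) \<Rightarrow> ('k^'n) set \<Rightarrow> ('k^'n) set \<Rightarrow> bool" where
  "inv_by br K U \<longleftrightarrow> (\<forall>k\<in>K. \<forall>u\<in>U. br k u \<in> U)"

lemma dim_less:
  fixes H K :: "('k::field^'n) set"
  assumes "vec.subspace H" "vec.subspace K" "H \<subset> K"
  shows "vec.dim H < vec.dim K"
  using vec.dim_psubset[of H K] assms by (simp add: vec.span_eq_iff[THEN iffD2])

context
  fixes br :: "'k::field^'n \<Rightarrow> 'k^'n \<Rightarrow> 'k^'n"
  assumes L: "lie_algebra br"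
  and nil: "\<And>x. \<exists>N. \<forall>v. (br x ^^ N) v = 0"
begin

lemma engel_core:
  shows "subalg br K \<Longrightarrow> vec.subspace U \<Longrightarrow> vec.subspace W \<Longrightarrow> U \<subset> W \<Longrightarrow>
     inv_by br K U \<Longrightarrow> inv_by br K W \<Longrightarrow> \<exists>w\<in>W. w \<notin> U \<and> (\<forall>k\<in>K. br k w \<in> U)"
proof (induction "vec.dim K" arbitrary: K U W rule: less_induct)
  case less
  have sK: "vec.subspace K" and cK: "\<And>a b. a \<in> K \<Longrightarrow> b \<in> K \<Longrightarrow> br a b \<in> K"
    using less.prems(1) unfolding subalg_def by auto
  have sU: "vec.subspace U" and sW: "vec.subspace W" using less.prems by auto
  show ?case
  proof (cases "K \<subseteq> {0}")
    case True
    obtain w where "w \<in> W" "w \<notin> U" using less.prems(4) by blast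
    moreover have "\<forall>k\<in>K. br k w \<in> U" using True sU zeroL[OF L] vec.subspace_0 by (metis singletonD subsetD)
    ultimately show ?thesis by blast
  next
    case False
    let ?P = "\<lambda>H. subalg br H \<and> H \<subseteq> K \<and> H \<noteq> K"
    have s0: "vec.subspace {0::'k^'n}" unfolding vec.subspace_def by simp
    have "?P {0}" using False s0 sK vec.subspace_0 unfolding subalg_def by (auto simp: zeroL[OF L])
    moreover have "\<forall>y. ?P y \<longrightarrow> vec.dim y < Suc CARD('n)"
    proof (intro allI impI)
      fix y :: "('k^'n) set"
      show "vec.dim y < Suc CARD('n)" using dim_subset_UNIV_cart_gen[of y] by simp
    qed
    ultimately have "\<exists>x. ?P x \<and> (\<forall>y. ?P y \<longrightarrow> vec.dim y \<le> vec.dim x)"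
      by (rule Lattices_Big.ex_has_greatest_nat)
    then obtain H where PH: "?P H" and maxH: "\<And>H'. ?P H' \<Longrightarrow> vec.dim H' \<le> vec.dim H"
      by blast
    have sH: "vec.subspace H" and cH: "\<And>a b. a \<in> H \<Longrightarrow> b \<in> H \<Longrightarrow> br a b \<in> H"
      using PH unfolding subalg_def by auto
    have HK: "H \<subset> K" using PH by auto
    have dHK: "vec.dim H < vec.dim K" by (rule dim_less[OF sH sK HK])
    have "\<exists>z\<in>K. z \<notin> H \<and> (\<forall>h\<in>H. br h z \<in> H)"
      apply (rule less.hyps[OF dHK])
      using PH sH sK HK cK cH unfolding inv_by_def by auto
    then obtain z where zK: "z \<in> K" and zH: "z \<notin> H" and zn: "\<And>h. h \<in> H \<Longrightarrow> br h z \<in> H" by blast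
    let ?H' = "vec.span (insert z H)"
    have spH: "vec.span H = H" using sH by (simp add: vec.span_eq_iff)
    have decomp: "\<exists>h c. h \<in> H \<and> a = h + c *s z" if "a \<in> ?H'" for a
    proof -
      from that obtain c where "a - c *s z \<in> H" unfolding vec.span_insert spH by blast
      then show ?thesis by (intro exI[of _ "a - c *s z"] exI[of _ c]) auto
    qed
    have HH': "H \<subseteq> ?H'" by (meson subset_insertI vec.span_superset subset_trans)
    have zH': "z \<in> ?H'" by (simp add: vec.span_base)
    have sub': "subalg br ?H'"
      unfolding subalg_def
    proof (intro conjI ballI)
      show "vec.subspace ?H'" by (rule vec.subspace_span)
      fix a b assume a: "a \<in> ?H'" and b: "b \<in> ?H'"
      obtain h1 c1 where h1: "h1 \<in> H" and ae: "a = h1 + c1 *s z" using decomp[OF a] by blast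
      obtain h2 c2 where h2: "h2 \<in> H" and be: "b = h2 + c2 *s z" using decomp[OF b] by blast
      have "br a b = br h1 h2 + c2 *s br h1 z + c1 *s (- br h2 z) + (c1 * c2) *s br z z"
        unfolding ae be by (simp add: addL[OF L] addR[OF L] scL[OF L] scR[OF L] anti[OF L, of h2 z] algebra_simps)
      also have "\<dots> \<in> H"
      proof -
        have "br h1 h2 + c2 *s br h1 z \<in> H"
          using cH[OF h1 h2] zn[OF h1] sH by (simp add: vec.subspace_add vec.subspace_scale)
        moreover have "c1 *s (- br h2 z) \<in> H"
          using zn[OF h2] sH by (simp add: vec.subspace_neg vec.subspace_scale)
        moreover have "(c1 * c2) *s br z z \<in> H"
          using sH alt[OF L] by (simp add: vec.subspace_0)
        ultimately show ?thesis using sH vec.subspace_add by (metis diff_conv_add_uminus)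
      qed
      finally show "br a b \<in> ?H'" using HH' by blast
    qed
    have H'K: "?H' \<subseteq> K" using zK HK sK by (intro vec.span_minimal) auto
    have H'eq: "?H' = K"
    proof (rule ccontr)
      assume "?H' \<noteq> K"
      then have "vec.dim ?H' \<le> vec.dim H" using maxH sub' H'K by blast
      moreover have "vec.dim H < vec.dim ?H'"
        using dim_less[OF sH vec.subspace_span] HH' zH' zH by blast
      ultimately show False by simp
    qed
    define W0 where "W0 = {w \<in> W. \<forall>h\<in>H. br h w \<in> U}"
    have invKU: "\<And>k u. k \<in> K \<Longrightarrow> u \<in> U \<Longrightarrow> br k u \<in> U" using less.prems(5) unfolding inv_by_def by blast
    have invKW: "\<And>k u. k \<in> K \<Longrightarrow> u \<in> W \<Longrightarrow> br k u \<in> W" using less.prems(6) unfolding inv_by_def by blast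
    have "\<exists>w\<in>W. w \<notin> U \<and> (\<forall>k\<in>H. br k w \<in> U)"
      apply (rule less.hyps[OF dHK PH[THEN conjunct1] sU sW less.prems(4)])
      using HK invKU invKW unfolding inv_by_def by auto
    then obtain w1 where w1W0: "w1 \<in> W0" and w1U: "w1 \<notin> U" unfolding W0_def by blast
    have W0z: "br z w \<in> W0" if "w \<in> W0" for w
    proof -
      have "br z w \<in> W" using invKW zK that unfolding W0_def by blast
      moreover have "br h (br z w) \<in> U" if h: "h \<in> H" for h
      proof -
        have "br h (br z w) = br z (br h w) + br (br h z) w" by (rule jac2[OF L])
        moreover have "br z (br h w) \<in> U" using invKU zK \<open>w \<in> W0\<close> h unfolding W0_def by blast
        moreover have "br (br h z) w \<in> U" using zn[OF h] \<open>w \<in> W0\<close> unfolding W0_def by blast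
        ultimately show ?thesis using sU vec.subspace_add by metis
      qed
      ultimately show ?thesis unfolding W0_def by blast
    qed
    have iter: "(br z ^^ i) w1 \<in> W0" for i
      by (induction i) (use w1W0 W0z in auto)
    obtain N where N: "\<And>v. (br z ^^ N) v = 0" using nil by blast
    have ex: "\<exists>j. (br z ^^ Suc j) w1 \<in> U"
      by (rule exI[of _ N]) (simp add: N zeroR[OF L] sU vec.subspace_0)
    define j where "j = (LEAST j. (br z ^^ Suc j) w1 \<in> U)"
    have jU: "br z ((br z ^^ j) w1) \<in> U" using LeastI_ex[OF ex] unfolding j_def by simp
    have jnU: "(br z ^^ j) w1 \<notin> U"
    proof (cases j)
      case 0 then show ?thesis using w1U by simp
    next
      case (Suc j')
      then have "j' < j" by simp
      then have "(br z ^^ Suc j') w1 \<notin> U" unfolding j_def by (rule not_less_Least)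
      then show ?thesis using Suc by simp
    qed
    let ?w = "(br z ^^ j) w1"
    have wW0: "?w \<in> W0" by (rule iter)
    have "\<forall>k\<in>K. br k ?w \<in> U"
    proof
      fix k assume "k \<in> K"
      then obtain h c where h: "h \<in> H" and ke: "k = h + c *s z" using decomp H'eq by blast
      have "br k ?w = br h ?w + c *s br z ?w" unfolding ke by (simp add: addL[OF L] scL[OF L])
      moreover have "br h ?w \<in> U" using wW0 h unfolding W0_def by blast
      ultimately show "br k ?w \<in> U" using jU sU vec.subspace_add vec.subspace_scale by metis
    qed
    then show ?thesis using wW0 jnU unfolding W0_def by blast
  qed
qed

end



fun zser :: "('k::field^'n \<Rightarrow> 'k^'n \<Rightarrow> 'k^'n) \<Rightarrow> nat \<Rightarrow> ('k^'n) set" where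
  "zser br 0 = {0}"
| "zser br (Suc i) = {v. \<forall>x. br x v \<in> zser br i}"

context
  fixes br :: "'k::field^'n \<Rightarrow> 'k^'n \<Rightarrow> 'k^'n"
  assumes L: "lie_algebra br"
begin

lemma zs_sub: "vec.subspace (zser br i)"
proof (induction i)
  case 0 then show ?case unfolding vec.subspace_def by simp
next
  case (Suc i)
  then show ?case unfolding vec.subspace_def
    by (auto simp: addR[OF L] scR[OF L] zeroR[OF L])
qed

lemma zs_mono: "zser br i \<subseteq> zser br (Suc i)"
proof (induction i)
  case 0 then show ?case by (auto simp: zeroR[OF L])
next
  case (Suc i)
  then show ?case by auto
qed

lemma zs_inv: "v \<in> zser br i \<Longrightarrow> br x v \<in> zser br i"
proof (cases i)
  case 0 then show "v \<in> zser br i \<Longrightarrow> br x v \<in> zser br i" by (simp add: zeroR[OF L])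
next
  case (Suc j) then show "v \<in> zser br i \<Longrightarrow> br x v \<in> zser br i" using zs_mono[of j] by auto
qed

lemma lc_sub: "lower_central br k \<subseteq> zser br (m - k)" if "zser br m = UNIV"
proof (induction k)
  case 0 then show ?case using that by simp
next
  case (Suc k)
  have "{br a b |a b. b \<in> lower_central br k} \<subseteq> zser br (m - Suc k)"
  proof clarify
    fix a b assume "b \<in> lower_central br k"
    then have b: "b \<in> zser br (m - k)" using Suc by blast
    show "br a b \<in> zser br (m - Suc k)"
    proof (cases "m - k")
      case 0 then show ?thesis using b by (simp add: zeroR[OF L])
    next
      case (Suc j) then have "m - Suc k = j" by simp
      then show ?thesis using b Suc by simp
    qed
  qed
  then show ?case by (simp add: vec.span_minimal zs_sub)
qed

context
  assumes nil: "\<And>x. \<exists>N. \<forall>v. (br x ^^ N) v = 0"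
begin

lemma zs_grow: assumes "zser br i \<noteq> UNIV" shows "zser br i \<subset> zser br (Suc i)"
proof -
  have "subalg br UNIV" unfolding subalg_def by (simp add: vec.subspace_UNIV)
  moreover have "inv_by br UNIV (zser br i)" unfolding inv_by_def using zs_inv by blast
  moreover have "inv_by br UNIV UNIV" unfolding inv_by_def by blast
  ultimately have "\<exists>w\<in>UNIV. w \<notin> zser br i \<and> (\<forall>k\<in>UNIV. br k w \<in> zser br i)"
    using engel_core[OF L nil, of UNIV "zser br i" UNIV] zs_sub[of i] vec.subspace_UNIV assms by blast
  then show ?thesis using zs_mono[of i] by auto
qed

lemma zs_dim: "zser br i = UNIV \<or> i \<le> vec.dim (zser br i)"
proof (induction i)
  case 0 then show ?case by simp
next
  case (Suc i)
  show ?case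
  proof (cases "zser br (Suc i) = UNIV")
    case False
    then have ne: "zser br i \<noteq> UNIV" using zs_mono[of i] by auto
    then have "i \<le> vec.dim (zser br i)" using Suc by blast
    moreover have "vec.dim (zser br i) < vec.dim (zser br (Suc i))"
      by (rule dim_less[OF zs_sub zs_sub zs_grow[OF ne]])
    ultimately show ?thesis by simp
  qed simp
qed

lemma zs_full: "zser br CARD('n) = UNIV"
proof (rule ccontr)
  assume ne: "zser br CARD('n) \<noteq> UNIV"
  then have "CARD('n) \<le> vec.dim (zser br CARD('n))" using zs_dim by blast
  moreover have "vec.dim (zser br CARD('n)) < vec.dim (UNIV :: ('k^'n) set)"
    using dim_less[OF zs_sub vec.subspace_UNIV] ne by blast
  moreover have "vec.dim (UNIV :: ('k^'n) set) \<le> CARD('n)" by (rule dim_subset_UNIV_cart_gen)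
  ultimately show False by simp
qed

lemma nilp: "nilpotent_lie br"
proof -
  have "lower_central br CARD('n) \<subseteq> {0}"
    using lc_sub[OF zs_full, of "CARD('n)"] by simp
  moreover have "0 \<in> lower_central br CARD('n)"
    by (cases "CARD('n)") (auto simp: vec.span_zero)
  ultimately show ?thesis unfolding nilpotent_lie_def by blast
qed

end
end



lemma adj_lemma:
  fixes A :: "'a::comm_ring_1^'n^'n"
  shows "(\<Sum>j\<in>UNIV. A$m$j * det (\<chi> i. if i = k then axis j 1 else row i A)) = (if m = k then det A else 0)"
proof -
  have "(\<Sum>j\<in>UNIV. A$m$j * det (\<chi> i. if i = k then axis j 1 else row i A))
      = (\<Sum>j\<in>UNIV. det (\<chi> i. if i = k then A$m$j *s axis j 1 else row i A))"
    by (simp add: det_row_mul)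
  also have "\<dots> = det (\<chi> i. if i = k then (\<Sum>j\<in>UNIV. A$m$j *s axis j 1) else row i A)"
    by (rule det_linear_row_sum[symmetric]) simp
  also have "(\<Sum>j\<in>UNIV. A$m$j *s axis j (1::'a)) = row m A"
    by (simp add: vec_eq_iff sum_component axis_def row_def if_distrib cong: if_cong)
  finally have eq: "(\<Sum>j\<in>UNIV. A$m$j * det (\<chi> i. if i = k then axis j 1 else row i A))
     = det (\<chi> i. if i = k then row m A else row i A)" .
  show ?thesis
  proof (cases "m = k")
    case True
    have "(\<chi> i. if i = k then row m A else row i A) = A"
      using True by (simp add: vec_eq_iff row_def)
    then show ?thesis using eq True by simp
  next
    case False
    have "det (\<chi> i. if i = k then row m A else row i A) = 0"
      by (rule det_identical_rows[of k m]) (use False in \<open>auto simp: row_def vec_eq_iff\<close>)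
    then show ?thesis using eq False by simp
  qed
qed

lemma const_sum: "finite S \<Longrightarrow> (\<Sum>j\<in>S. [:f j:]) = [:\<Sum>j\<in>S. f j:]"
  by (induction S rule: finite_induct) auto

definition Nm :: "'k::field^'n^'n \<Rightarrow> 'k poly^'n^'n" where
  "Nm M = (\<chi> i j. (if i = j then [:0, 1:] else 0) - [:M $ i $ j:])"

lemma ad_charpoly_Nm: "ad_charpoly br x = det (Nm (ad_matrix br x))"
  unfolding ad_charpoly_def Nm_def ..

lemma Nm_mult:
  fixes M X :: "'k::field^'n^'n"
  shows "(\<Sum>j\<in>UNIV. Nm M $m$j * [:X$j$q:]) = [:0,1:] * [:X$m$q:] - [:(M ** X)$m$q:]"
proof -
  have "(\<Sum>j\<in>UNIV. Nm M $m$j * [:X$j$q:])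
     = (\<Sum>j\<in>UNIV. (if m = j then [:0,1:] * [:X$j$q:] else 0)) - (\<Sum>j\<in>UNIV. [:M$m$j * X$j$q:])"
  proof -
    have "Nm M $m$j * [:X$j$q:] = (if m = j then [:0,1:] * [:X$j$q:] else 0) - [:M$m$j * X$j$q:]" for j
      unfolding Nm_def by (cases "m = j") (simp_all add: left_diff_distrib)
    then show ?thesis by (simp add: sum_subtractf)
  qed
  also have "\<dots> = [:0,1:] * [:X$m$q:] - [:(M ** X)$m$q:]"
    by (simp add: const_sum matrix_matrix_mult_def)
  finally show ?thesis .
qed

fun mpow :: "'k::field^'n^'n \<Rightarrow> nat \<Rightarrow> 'k^'n^'n" where
  "mpow M 0 = mat 1"
| "mpow M (Suc k) = M ** mpow M k"

fun Sp :: "'k::field^'n^'n \<Rightarrow> nat \<Rightarrow> 'n \<Rightarrow> 'n \<Rightarrow> 'k poly" where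
  "Sp M 0 i j = 0"
| "Sp M (Suc k) i j = [:0,1:] * Sp M k i j + [:mpow M k $ i $ j:]"

lemma Sp_lemma:
  "(\<Sum>j\<in>UNIV. Nm M $m$j * Sp M k j q) = (if m = q then [:0,1:]^k else 0) - [:mpow M k $m$q:]"
proof (induction k)
  case 0 then show ?case by (simp add: mat_def)
next
  case (Suc k)
  have "(\<Sum>j\<in>UNIV. Nm M $m$j * Sp M (Suc k) j q)
     = [:0,1:] * (\<Sum>j\<in>UNIV. Nm M $m$j * Sp M k j q) + (\<Sum>j\<in>UNIV. Nm M $m$j * [:mpow M k $j$q:])"
    by (simp add: distrib_left sum.distrib sum_distrib_left algebra_simps)
  also have "\<dots> = (if m = q then [:0,1:]^Suc k else 0) - [:mpow M (Suc k) $m$q:]"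
    unfolding Suc Nm_mult by (simp add: algebra_simps)
  finally show ?case .
qed

lemma zero_lemma:
  fixes M :: "'k::field^'n^'n" and C :: "'n \<Rightarrow> 'n \<Rightarrow> 'k poly"
  assumes h: "\<And>m q. (\<Sum>j\<in>UNIV. Nm M $m$j * C j q) = [:B m q:]"
  shows "C j q = 0"
proof (rule ccontr)
  assume nz: "C j q \<noteq> 0"
  let ?D = "{degree (C a b) | a b. C a b \<noteq> 0}"
  have fin: "finite ?D"
  proof -
    have "?D \<subseteq> (\<lambda>(a,b). degree (C a b)) ` UNIV" by auto
    moreover have "finite ((\<lambda>(a,b). degree (C a b)) ` (UNIV :: ('n \<times> 'n) set))"
      by (rule finite_imageI) simp
    ultimately show ?thesis by (rule finite_subset)
  qed
  have ne: "?D \<noteq> {}" using nz by blast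
  define d where "d = Max ?D"
  obtain i l where Cil: "C i l \<noteq> 0" and di: "degree (C i l) = d"
  proof -
    have "d \<in> ?D" using Max_in[OF fin ne] unfolding d_def .
    then show ?thesis using that by auto
  qed
  have le: "degree (C a l) \<le> d" for a
    using Max_ge[OF fin] unfolding d_def by (cases "C a l = 0") auto
  have "coeff (\<Sum>j\<in>UNIV. Nm M $i$j * C j l) (Suc d) = (\<Sum>j\<in>UNIV. if i = j then coeff (C j l) d else 0)"
  proof -
    have "coeff (Nm M $i$j * C j l) (Suc d) = (if i = j then coeff (C j l) d else 0)" for j
    proof -
      have "coeff ([:M$i$j:] * C j l) (Suc d) = 0"
        using le[of j] by (simp add: coeff_eq_0)
      then show ?thesis unfolding Nm_def by (cases "i = j") (simp_all add: left_diff_distrib)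
    qed
    then show ?thesis by (simp add: coeff_sum)
  qed
  also have "\<dots> = coeff (C i l) d" by simp
  also have "\<dots> \<noteq> 0" using Cil di by (metis leading_coeff_0_iff)
  finally show False using h[of i l] by simp
qed

lemma cayley_nil:
  fixes M :: "'k::field^'n^'n"
  assumes cp: "det (Nm M) = [:0,1:]^CARD('n)"
  shows "mpow M CARD('n) = 0"
proof -
  let ?n = "CARD('n)"
  define C where "C j q = det (\<chi> i. if i = q then axis j 1 else row i (Nm M)) - Sp M ?n j q" for j q
  have h: "(\<Sum>j\<in>UNIV. Nm M $m$j * C j q) = [:mpow M ?n $m$q:]" for m q
  proof -
    have "(\<Sum>j\<in>UNIV. Nm M $m$j * C j q) = (\<Sum>j\<in>UNIV. Nm M $m$j * det (\<chi> i. if i = q then axis j 1 else row i (Nm M)))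
       - (\<Sum>j\<in>UNIV. Nm M $m$j * Sp M ?n j q)"
      unfolding C_def by (simp add: right_diff_distrib sum_subtractf)
    also have "\<dots> = [:mpow M ?n $m$q:]"
      unfolding adj_lemma Sp_lemma cp by simp
    finally show ?thesis .
  qed
  have "C j q = 0" for j q by (rule zero_lemma[OF h])
  then have "[:mpow M ?n $m$q:] = 0" for m q using h[of m q] by simp
  then show ?thesis by (simp add: vec_eq_iff)
qed




lemma Nm_deg: "degree (Nm M $i$j) \<le> (if i = j then 1 else 0)"
  unfolding Nm_def by (cases "i = j") auto

lemma Nm_diag: "Nm M $i$i = [:- (M$i$i), 1:]"
  unfolding Nm_def by simp

lemma cof: "coeff (of_int s * (q::'k::field poly)) j = of_int s * coeff q j"
  by (simp add: of_int_poly)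

lemma coeff_cp:
  fixes M :: "'k::field^'n^'n"
  shows "coeff (det (Nm M)) j = (\<Sum>p\<in>{p. p permutes UNIV}. of_int (sign p) * coeff (\<Prod>i\<in>UNIV. Nm M $i$(p i)) j)"
  unfolding det_def coeff_sum cof ..

lemma degf:
  fixes M :: "'k::field^'n^'n"
  shows "degree (\<Prod>i\<in>UNIV. Nm M $i$(p i)) \<le> (\<Sum>i\<in>UNIV. if p i = i then 1 else 0)"
proof -
  have "degree (\<Prod>i\<in>UNIV. Nm M $i$(p i)) \<le> (\<Sum>i\<in>UNIV. degree (Nm M $i$(p i)))"
    using degree_prod_sum_le[of UNIV "\<lambda>i. Nm M $i$(p i)"] by (simp add: o_def)
  also have "\<dots> \<le> (\<Sum>i\<in>UNIV. if p i = i then 1 else 0)"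
  proof (rule sum_mono)
    fix i show "degree (Nm M $i$(p i)) \<le> (if p i = i then 1 else 0)"
      using Nm_deg[of M i "p i"] by (cases "p i = i") auto
  qed
  finally show ?thesis .
qed

lemma cnt_le: "(\<Sum>i\<in>(UNIV::'n::finite set). if p i = i then 1 else (0::nat)) \<le> CARD('n)"
proof -
  have "(\<Sum>i\<in>(UNIV::'n set). if p i = i then 1 else (0::nat)) \<le> (\<Sum>i\<in>(UNIV::'n set). 1)"
    by (rule sum_mono) auto
  then show ?thesis by simp
qed

lemma cnt_less: assumes "p \<noteq> id" shows "(\<Sum>i\<in>(UNIV::'n::finite set). if p i = i then 1 else (0::nat)) < CARD('n)"
proof -
  obtain a where "p a \<noteq> a" using assms by (auto simp: fun_eq_iff)
  then have "(\<Sum>i\<in>(UNIV::'n set). if p i = i then 1 else (0::nat)) < (\<Sum>i\<in>(UNIV::'n set). 1)"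
    by (intro sum_strict_mono_ex1) auto
  then show ?thesis by simp
qed

lemma cp_high:
  fixes M :: "'k::field^'n^'n"
  assumes "j > CARD('n)"
  shows "coeff (det (Nm M)) j = 0"
proof -
  have "coeff (\<Prod>i\<in>UNIV. Nm M $i$(p i)) j = 0" for p
    using degf[of M p] cnt_le[of p] assms by (intro coeff_eq_0) linarith
  then show ?thesis unfolding coeff_cp by simp
qed

lemma cp_top:
  fixes M :: "'k::field^'n^'n"
  shows "coeff (det (Nm M)) CARD('n) = 1"
proof -
  have c: "coeff (\<Prod>i\<in>UNIV. Nm M $i$(p i)) CARD('n) = (if p = id then 1 else 0)" for p
  proof (cases "p = id")
    case False
    then show ?thesis using degf[of M p] cnt_less[of p] by (simp add: coeff_eq_0)
  next
    case True
    have nz: "\<forall>i\<in>UNIV. Nm M $i$i \<noteq> 0" by (simp add: Nm_diag)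
    have "degree (\<Prod>i\<in>UNIV. Nm M $i$i) = (\<Sum>i\<in>(UNIV::'n set). 1)"
      using degree_prod_eq_sum_degree[OF nz] by (simp add: Nm_diag)
    moreover have "lead_coeff (\<Prod>i\<in>UNIV. Nm M $i$i) = 1"
      by (simp add: lead_coeff_prod Nm_diag)
    ultimately show ?thesis using True by simp
  qed
  have "coeff (det (Nm M)) CARD('n) = (\<Sum>p\<in>{p. p permutes (UNIV::'n set)}. if p = id then of_int (sign p) else 0)"
    unfolding coeff_cp c by (rule sum.cong[OF refl]) (metis mult_1_right mult_zero_right)
  also have "\<dots> = 1" by (simp add: permutes_id sign_id finite_permutations)
  finally show ?thesis .
qed

lemma cp_nz: "det (Nm (M::'k::field^'n^'n)) \<noteq> 0"
  using cp_top[of M] by auto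

lemma cp_deg: "degree (det (Nm (M::'k::field^'n^'n))) \<le> CARD('n)"
  by (rule degree_le) (simp add: cp_high)

lemma sq_nil:
  fixes M :: "'k::field^'n^'n"
  assumes sq: "M ** M = 0" and j: "j < CARD('n)"
  shows "coeff (det (Nm M)) j = 0"
proof -
  let ?t = "[:0,1:] :: 'k poly"
  let ?n = "CARD('n)"
  have prodm: "Nm M ** Nm (-M) = mat (?t^2)"
  proof -
    have "(\<Sum>j\<in>UNIV. Nm M $m$j * Nm (-M) $j$q) = (if m = q then ?t^2 else 0)" for m q
    proof -
      have e: "Nm (-M) $j$q = (if j = q then ?t else 0) + [:M$j$q:]" for j
        unfolding Nm_def by simp
      have "(\<Sum>j\<in>UNIV. Nm M $m$j * Nm (-M) $j$q)
          = (\<Sum>j\<in>UNIV. if j = q then Nm M $m$j * ?t else 0) + (\<Sum>j\<in>UNIV. Nm M $m$j * [:M$j$q:])"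
      proof -
        have "Nm M $m$j * Nm (-M) $j$q = (if j = q then Nm M $m$j * ?t else 0) + Nm M $m$j * [:M$j$q:]" for j
          unfolding e by (cases "j = q") (simp_all only: simp_thms if_True if_False distrib_left mult_zero_right add_0_left)
        then show ?thesis by (simp only: sum.distrib)
      qed
      also have "\<dots> = Nm M $m$q * ?t + (?t * [:M$m$q:] - [:(M ** M)$m$q:])"
        unfolding Nm_mult by (simp only: sum.delta finite UNIV_I if_True)
      also have "\<dots> = (if m = q then ?t^2 else 0)"
        unfolding sq Nm_def by (simp add: algebra_simps power2_eq_square)
      finally show ?thesis .
    qed
    then show ?thesis unfolding matrix_matrix_mult_def mat_def by (simp add: vec_eq_iff)
  qed
  have "det (Nm M) * det (Nm (-M)) = det (mat (?t^2) :: 'k poly^'n^'n)"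
    by (simp add: det_mul[symmetric] prodm)
  also have "\<dots> = (?t^2)^?n"
    by (subst det_diagonal) (simp_all add: mat_def)
  also have "\<dots> = [:- 0, 1:]^(2 * ?n)" by (simp add: power_mult)
  finally have pe: "det (Nm M) * det (Nm (-M)) = [:- 0, 1:]^(2 * ?n)" .
  have "order 0 (det (Nm M) * det (Nm (-M))) = 2 * ?n"
    unfolding pe by (rule order_power_n_n)
  moreover have "order 0 (det (Nm M) * det (Nm (-M))) = order 0 (det (Nm M)) + order 0 (det (Nm (-M)))"
    by (rule order_mult) (simp add: cp_nz)
  moreover have "order 0 (det (Nm (-M))) \<le> ?n"
    using order_degree[OF cp_nz, of 0 "-M"] cp_deg[of "-M"] by simp
  ultimately have "?n \<le> order 0 (det (Nm M))" by simp
  then have "[:- 0, 1:]^?n dvd det (Nm M)"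
    using order_1[of 0 "det (Nm M)"] le_imp_power_dvd dvd_trans by blast
  then obtain q where q: "det (Nm M) = [:- 0, 1:]^?n * q"
    by (erule dvdE)
  have "[:- 0, 1:]^?n = (monom 1 ?n :: 'k poly)" by (simp add: monom_altdef)
  then have "det (Nm M) = monom 1 ?n * q" using q by simp
  then show ?thesis using j by (simp only: coeff_monom_mult if_True)
qed




context
  fixes br :: "'k::field^'n \<Rightarrow> 'k^'n \<Rightarrow> 'k^'n"
  assumes L: "lie_algebra br"
begin

lemma ds_ideal: "lie_ideal br I \<Longrightarrow> lie_ideal br (derived_series br I k)"
proof (induction k)
  case 0 then show ?case by simp
next
  case (Suc k)
  let ?D = "derived_series br I k"
  let ?G = "{br a b | a b. a \<in> ?D \<and> b \<in> ?D}"
  have cl: "br x y \<in> ?D" if "y \<in> ?D" for x y using Suc that unfolding lie_ideal_def by blast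
  have "br x y \<in> vec.span ?G" if "y \<in> vec.span ?G" for x y
  proof (rule span_closed[OF L vec.subspace_span _ that])
    fix g assume "g \<in> ?G"
    then obtain a b where g: "g = br a b" and a: "a \<in> ?D" and b: "b \<in> ?D" by blast
    have "br x g = br a (br x b) + br (br x a) b" unfolding g by (rule jac2[OF L])
    moreover have "br a (br x b) \<in> vec.span ?G" using a cl[OF b] by (intro vec.span_base) blast
    moreover have "br (br x a) b \<in> vec.span ?G" using b cl[OF a] by (intro vec.span_base) blast
    ultimately show "br x g \<in> vec.span ?G" by (simp add: vec.span_add)
  qed
  then have P: "vec.subspace (vec.span ?G) \<and> (\<forall>x y. y \<in> vec.span ?G \<longrightarrow> br x y \<in> vec.span ?G)"
    using vec.subspace_span by blast
  have eq: "derived_series br I (Suc k) = vec.span ?G" by (simp only: derived_series.simps)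
  show ?case unfolding lie_ideal_def eq by (rule P)
qed

lemma ad_mv: "ad_matrix br x *v v = br x v"
proof -
  have "ad_matrix br x = matrix (br x)" unfolding ad_matrix_def matrix_def ..
  then show ?thesis using matrix_works[OF linR[OF L]] by simp
qed

lemma mpow_mv: "mpow (ad_matrix br x) k *v v = (br x ^^ k) v"
  by (induction k arbitrary: v) (simp_all add: matrix_vector_mul_assoc[symmetric] ad_mv)

lemma main:
  assumes reg: "regular_lie_algebra br" and nss: "\<not> semisimple br"
  shows "nilpotent_lie br"
proof -
  let ?n = "CARD('n)"
  obtain I where I: "lie_ideal br I" and sol: "solvable_subalg br I" and Inz: "I \<noteq> {0}"
    using nss unfolding semisimple_def by blast
  obtain k where k: "derived_series br I k = {0}" using sol unfolding solvable_subalg_def by blast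
  define k0 where "k0 = (LEAST k. derived_series br I k = {0})"
  have k0: "derived_series br I k0 = {0}" unfolding k0_def by (rule LeastI[of _ k]) (rule k)
  have "k0 \<noteq> 0"
  proof
    assume "k0 = 0" then show False using k0 Inz by simp
  qed
  then obtain j where j: "k0 = Suc j" by (cases k0) auto
  have Dj: "derived_series br I j \<noteq> {0}"
    using not_less_Least[of j "\<lambda>k. derived_series br I k = {0}"] j unfolding k0_def by simp
  have idj: "lie_ideal br (derived_series br I j)" by (rule ds_ideal[OF I])
  then have "0 \<in> derived_series br I j" unfolding lie_ideal_def by (simp add: vec.subspace_0)
  then obtain a where aD: "a \<in> derived_series br I j" and anz: "a \<noteq> 0" using Dj by blast
  have aa: "br a (br a y) = 0" for y
  proof -
    have clj: "\<forall>x y. y \<in> derived_series br I j \<longrightarrow> br x y \<in> derived_series br I j"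
      using idj unfolding lie_ideal_def by (rule conjunct2)
    have "br y a \<in> derived_series br I j" using clj aD by blast
    then have "- br y a \<in> derived_series br I j"
      using idj unfolding lie_ideal_def by (simp add: vec.subspace_neg)
    then have "br a y \<in> derived_series br I j" by (simp add: anti[OF L, of y a])
    then have "br a (br a y) \<in> {br c d | c d. c \<in> derived_series br I j \<and> d \<in> derived_series br I j}"
      using aD by blast
    then have "br a (br a y) \<in> vec.span {br c d | c d. c \<in> derived_series br I j \<and> d \<in> derived_series br I j}"
      by (rule vec.span_base)
    then have "br a (br a y) \<in> derived_series br I (Suc j)" by (simp only: derived_series.simps)
    moreover have "derived_series br I (Suc j) = {0}" using k0 j by (simp only:)
    ultimately show ?thesis by blast
  qed
  let ?A = "ad_matrix br a"
  have AA: "?A ** ?A = 0"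
    unfolding matrix_eq by (simp add: matrix_vector_mul_assoc[symmetric] ad_mv aa)
  have rk_le: "lie_rank br \<le> ?n"
    unfolding lie_rank_def ad_charpoly_Nm by (rule Least_le) (metis cp_top one_neq_zero)
  have rk: "lie_rank br = ?n"
  proof (rule ccontr)
    assume "lie_rank br \<noteq> ?n"
    then have "lie_rank br < ?n" using rk_le by simp
    then have "coeff (ad_charpoly br a) (lie_rank br) = 0"
      unfolding ad_charpoly_Nm by (rule sq_nil[OF AA])
    moreover have "regular_element br a" using reg anz unfolding regular_lie_algebra_def by blast
    ultimately show False unfolding regular_element_def by simp
  qed
  have nilx: "\<exists>N. \<forall>v. (br x ^^ N) v = 0" for x
  proof -
    have low: "coeff (ad_charpoly br x) i = 0" if "i < ?n" for i
      using not_less_Least[of i "\<lambda>r. \<exists>x. coeff (ad_charpoly br x) r \<noteq> 0"] that rk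
      unfolding lie_rank_def by auto
    have "det (Nm (ad_matrix br x)) = [:0,1:]^?n"
    proof (rule poly_eqI)
      fix i
      have "[:0,1:]^?n = (monom 1 ?n :: 'k poly)" by (simp add: monom_altdef)
      then have r: "coeff ([:0,1:]^?n) i = (if ?n = i then 1 else (0::'k))" by (simp add: coeff_monom)
      show "coeff (det (Nm (ad_matrix br x))) i = coeff ([:0,1:]^?n) i"
        unfolding r using low[of i] cp_top[of "ad_matrix br x"] cp_high[of i "ad_matrix br x"]
        by (cases "i < ?n"; cases "i = ?n") (auto simp: ad_charpoly_Nm)
    qed
    then have "mpow (ad_matrix br x) ?n = 0" by (rule cayley_nil)
    then have "(br x ^^ ?n) v = 0" for v using mpow_mv[of x ?n v] by simp
    then show ?thesis by blast
  qed
  show ?thesis by (rule nilp[OF L nilx])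
qed

end

theorem lemma3:
  fixes br :: "'k::field^'n \<Rightarrow> 'k^'n \<Rightarrow> 'k^'n"
  assumes "infinite (UNIV :: 'k set)"
    and "lie_algebra br"
    and "regular_lie_algebra br"
    and "\<not> semisimple br"
  shows "nilpotent_lie br"
  by (rule main[OF assms(2) assms(3) assms(4)])

end
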